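(* For every formula $\phi$, $\mathbf{GLP}\vdash[1]\phi$ if and only if $\mathbf{GLP}\vdash Q_k(\phi)$ for some $k\geq 1$.
   Context: $\mathbf{GLP}$ is the propositional polymodal logic with modalities $[0],[1],\dots$ ($\langle k\rangle:=\neg[k]\neg$) axiomatized by classical tautologies; $[k](\phi\to\psi)\to([k]\phi\to[k]\psi)$; $[k]([k]\phi\to\phi)\to[k]\phi$; $\langle j\rangle\phi\to[k]\langle j\rangle\phi$ for $j<k$; $[j]\phi\to[k]\phi$ for $j\leq k$; rules modus ponens and necessitation. Define $Q_1(\phi):=\phi$ and $Q_{i+1}(\phi):=\phi\lor[0]Q_i(\phi)$. *)

theory Defs
  imports Main
begin

datatype fm =
    Var nat
  | Bot
  | Imp fm fm
  | Box nat fm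

definition Neg :: "fm \<Rightarrow> fm" where
  "Neg p = Imp p Bot"

definition Or :: "fm \<Rightarrow> fm \<Rightarrow> fm" where
  "Or p q = Imp (Neg p) q"

definition And :: "fm \<Rightarrow> fm \<Rightarrow> fm" where
  "And p q = Neg (Imp p (Neg q))"

definition Dia :: "nat \<Rightarrow> fm \<Rightarrow> fm" where
  "Dia k p = Neg (Box k (Neg p))"

fun beval :: "(fm \<Rightarrow> bool) \<Rightarrow> fm \<Rightarrow> bool" where
  "beval v (Var n) = v (Var n)"
| "beval v Bot = False"
| "beval v (Imp p q) = (beval v p \<longrightarrow> beval v q)"
| "beval v (Box k p) = v (Box k p)"

definition tautology :: "fm \<Rightarrow> bool" where
  "tautology p = (\<forall>v. beval v p)"

inductive GLP_prv :: "fm \<Rightarrow> bool" where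
  taut: "tautology p \<Longrightarrow> GLP_prv p"
| K: "GLP_prv (Imp (Box k (Imp p q)) (Imp (Box k p) (Box k q)))"
| Loeb: "GLP_prv (Imp (Box k (Imp (Box k p) p)) (Box k p))"
| Ax3: "j < k \<Longrightarrow> GLP_prv (Imp (Dia j p) (Box k (Dia j p)))"
| Ax4: "j \<le> k \<Longrightarrow> GLP_prv (Imp (Box j p) (Box k p))"
| MP: "GLP_prv (Imp p q) \<Longrightarrow> GLP_prv p \<Longrightarrow> GLP_prv q"
| Nec: "GLP_prv p \<Longrightarrow> GLP_prv (Box k p)"

fun Q :: "nat \<Rightarrow> fm \<Rightarrow> fm" where
  "Q 0 p = p"
| "Q (Suc 0) p = p"
| "Q (Suc (Suc i)) p = Or p (Box 0 (Q (Suc i) p))"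

end

theory Submission
  imports Defs
begin

fun imps :: "fm list \<Rightarrow> fm \<Rightarrow> fm" where
  "imps [] c = c"
| "imps (a # L) c = Imp a (imps L c)"

fun cj :: "fm list \<Rightarrow> fm" where
  "cj [] = Imp Bot Bot"
| "cj (a # L) = And a (cj L)"

fun dj :: "fm list \<Rightarrow> fm" where
  "dj [] = Bot"
| "dj (a # L) = Or a (dj L)"

lemma beval_simps[simp]:
  "beval v (Neg a) = (\<not> beval v a)"
  "beval v (Or a b) = (beval v a \<or> beval v b)"
  "beval v (And a b) = (beval v a \<and> beval v b)"
  "beval v (Dia k a) = (\<not> v (Box k (Neg a)))"
  by (auto simp: Neg_def Or_def And_def Dia_def)

lemma beval_imps[simp]: "beval v (imps L c) = ((\<forall>a\<in>set L. beval v a) \<longrightarrow> beval v c)"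
  by (induction L) auto

lemma beval_cj[simp]: "beval v (cj L) = (\<forall>a\<in>set L. beval v a)"
  by (induction L) auto

lemma beval_dj[simp]: "beval v (dj L) = (\<exists>a\<in>set L. beval v a)"
  by (induction L) auto

lemma prv_imps_mp: "GLP_prv (imps P c) \<Longrightarrow> \<forall>a\<in>set P. GLP_prv a \<Longrightarrow> GLP_prv c"
  by (induction P) (auto intro: GLP_prv.MP)

lemma prv_sem:
  assumes "\<forall>a\<in>set P. GLP_prv a" and "\<And>v. (\<forall>a\<in>set P. beval v a) \<Longrightarrow> beval v c"
  shows "GLP_prv c"
proof -
  have "tautology (imps P c)" using assms(2) by (simp add: tautology_def)
  then show ?thesis using prv_imps_mp assms(1) GLP_prv.taut by blast
qed

lemma prv_mono:
  assumes "GLP_prv (Imp a b)" shows "GLP_prv (Imp (Box k a) (Box k b))"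
  using GLP_prv.MP[OF GLP_prv.K GLP_prv.Nec[OF assms]] .

lemma prv_mono2:
  assumes "GLP_prv (Imp a (Imp b c))" shows "GLP_prv (Imp (Box k a) (Imp (Box k b) (Box k c)))"
proof -
  have 1: "GLP_prv (Imp (Box k a) (Box k (Imp b c)))" using prv_mono[OF assms] .
  have 2: "GLP_prv (Imp (Box k (Imp b c)) (Imp (Box k b) (Box k c)))" by (rule GLP_prv.K)
  show ?thesis by (rule prv_sem[of "[Imp (Box k a) (Box k (Imp b c)), Imp (Box k (Imp b c)) (Imp (Box k b) (Box k c))]"]) (use 1 2 in auto)
qed

lemma prv_trans4: "GLP_prv (Imp (Box k t) (Box k (Box k t)))"
proof -
  define p where "p = And t (Box k t)"
  have 1: "GLP_prv (Imp (Box k p) (Box k t))" unfolding p_def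
    by (rule prv_mono, rule prv_sem[of "[]"]) auto
  have 2: "GLP_prv (Imp t (Imp (Box k p) p))"
    by (rule prv_sem[of "[Imp (Box k p) (Box k t)]"]) (use 1 in \<open>auto simp: p_def\<close>)
  have 3: "GLP_prv (Imp (Box k t) (Box k (Imp (Box k p) p)))" using prv_mono[OF 2] .
  have 4: "GLP_prv (Imp (Box k (Imp (Box k p) p)) (Box k p))" by (rule GLP_prv.Loeb)
  have 5: "GLP_prv (Imp (Box k p) (Box k (Box k t)))" unfolding p_def
    by (rule prv_mono, rule prv_sem[of "[]"]) auto
  show ?thesis
    by (rule prv_sem[of "[Imp (Box k t) (Box k (Imp (Box k p) p)), Imp (Box k (Imp (Box k p) p)) (Box k p), Imp (Box k p) (Box k (Box k t))]"])
       (use 3 4 5 in auto)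
qed

lemma prv_box_imps: "GLP_prv (Imp (Box k (imps L c)) (imps (map (Box k) L) (Box k c)))"
proof (induction L arbitrary: c)
  case Nil
  then show ?case by (intro prv_sem[of "[]"]) auto
next
  case (Cons a L)
  have 1: "GLP_prv (Imp (Box k (Imp a (imps L c))) (Imp (Box k a) (Box k (imps L c))))" by (rule GLP_prv.K)
  show ?case
    by (rule prv_sem[of "[Imp (Box k (Imp a (imps L c))) (Imp (Box k a) (Box k (imps L c))), Imp (Box k (imps L c)) (imps (map (Box k) L) (Box k c))]"])
       (use 1 Cons in auto)
qed


definition incons :: "fm set \<Rightarrow> bool" where
  "incons S \<longleftrightarrow> (\<exists>L. set L \<subseteq> S \<and> GLP_prv (imps L Bot))"

definition mcs :: "fm set \<Rightarrow> bool" where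
  "mcs M \<longleftrightarrow> \<not> incons M \<and> (\<forall>x. \<not> incons (insert x M) \<longrightarrow> x \<in> M)"

lemma lindenbaum:
  assumes "\<not> incons S" shows "\<exists>M. mcs M \<and> S \<subseteq> M"
proof -
  let ?A = "{T. S \<subseteq> T \<and> \<not> incons T}"
  have "\<forall>C\<in>chains ?A. \<exists>U\<in>?A. \<forall>X\<in>C. X \<subseteq> U"
  proof
    fix C assume C: "C \<in> chains ?A"
    show "\<exists>U\<in>?A. \<forall>X\<in>C. X \<subseteq> U"
    proof (cases "C = {}")
      case True then show ?thesis using assms by auto
    next
      case False
      have "\<not> incons (\<Union>C)"
      proof
        assume "incons (\<Union>C)"
        then obtain L where L: "set L \<subseteq> \<Union>C" "GLP_prv (imps L Bot)" by (auto simp: incons_def)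
        have ch: "subset.chain ?A C" using C by (simp add: chains_alt_def)
        obtain B where "B \<in> C" "set L \<subseteq> B"
          using finite_subset_Union_chain[OF _ L(1) False ch] by auto
        then have "incons B" using L(2) by (auto simp: incons_def)
        then show False using \<open>B \<in> C\<close> ch by (auto simp: subset.chain_def)
      qed
      moreover have "S \<subseteq> \<Union>C" using False C unfolding chains_alt_def subset.chain_def by blast
      ultimately show ?thesis by blast
    qed
  qed
  then obtain M where M: "M \<in> ?A" "\<forall>X\<in>?A. M \<subseteq> X \<longrightarrow> X = M" using Zorn_Lemma2[of ?A] by blast
  have "mcs M" unfolding mcs_def
  proof (intro conjI allI impI)
    show "\<not> incons M" using M by auto
  next
    fix x assume "\<not> incons (insert x M)"
    then have "insert x M \<in> ?A" using M by auto
    then show "x \<in> M" using M(2) by blast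
  qed
  then show ?thesis using M by auto
qed

lemma incons_insert:
  assumes "incons (insert x M)" shows "\<exists>L. set L \<subseteq> M \<and> GLP_prv (imps L (Neg x))"
proof -
  obtain L0 where L0: "set L0 \<subseteq> insert x M" "GLP_prv (imps L0 Bot)" using assms by (auto simp: incons_def)
  let ?L = "filter (\<lambda>a. a \<noteq> x) L0"
  have "GLP_prv (imps ?L (Neg x))"
    by (rule prv_sem[of "[imps L0 Bot]"]) (use L0 in auto)
  moreover have "set ?L \<subseteq> M" using L0 by auto
  ultimately show ?thesis by blast
qed

lemma mcs_sem:
  assumes "mcs M" "set L \<subseteq> M" "\<forall>a\<in>set P. GLP_prv a"
    "\<And>v. (\<forall>a\<in>set L. beval v a) \<Longrightarrow> (\<forall>a\<in>set P. beval v a) \<Longrightarrow> beval v c"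
  shows "c \<in> M"
proof (rule ccontr)
  assume "c \<notin> M"
  then have "incons (insert c M)" using assms(1) by (auto simp: mcs_def)
  then obtain L' where L': "set L' \<subseteq> M" "GLP_prv (imps L' (Neg c))" using incons_insert by blast
  have "GLP_prv (imps (L @ L') Bot)"
  proof (rule prv_sem[of "imps L' (Neg c) # P"])
    show "\<forall>a\<in>set (imps L' (Neg c) # P). GLP_prv a" using L' assms(3) by auto
  next
    fix v assume h: "\<forall>a\<in>set (imps L' (Neg c) # P). beval v a"
    show "beval v (imps (L @ L') Bot)"
    proof (simp, rule ccontr)
      assume "\<not> (\<exists>x\<in>set L \<union> set L'. \<not> beval v x)"
      then have "\<forall>a\<in>set L. beval v a" "\<forall>a\<in>set L'. beval v a" by auto
      then show False using h assms(4)[of v] by auto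
    qed
  qed
  then have "incons M" using L' assms(2) unfolding incons_def
    by (metis le_sup_iff set_append)
  then show False using assms(1) by (simp add: mcs_def)
qed

lemma mcs_prv: "mcs M \<Longrightarrow> GLP_prv c \<Longrightarrow> c \<in> M"
  by (rule mcs_sem[of M "[]" "[c]"]) auto

lemma mcs_mp: "mcs M \<Longrightarrow> Imp a b \<in> M \<Longrightarrow> a \<in> M \<Longrightarrow> b \<in> M"
  by (rule mcs_sem[of M "[Imp a b, a]" "[]"]) auto

lemma mcs_bot: "mcs M \<Longrightarrow> Bot \<notin> M"
proof
  assume "mcs M" "Bot \<in> M"
  then have "incons M" unfolding incons_def
    by (intro exI[of _ "[Bot]"]) (auto intro: prv_sem[of "[]"])
  then show False using \<open>mcs M\<close> by (simp add: mcs_def)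
qed

lemma mcs_neg: "mcs M \<Longrightarrow> (Neg a \<in> M) = (a \<notin> M)"
proof
  assume m: "mcs M" and n: "Neg a \<in> M"
  show "a \<notin> M"
  proof
    assume "a \<in> M"
    then have "Bot \<in> M" using m n mcs_mp[of M a Bot] unfolding Neg_def by blast
    then show False using mcs_bot m by blast
  qed
next
  assume m: "mcs M" and na: "a \<notin> M"
  show "Neg a \<in> M"
  proof (rule ccontr)
    assume "Neg a \<notin> M"
    then have "incons (insert (Neg a) M)" "incons (insert a M)" using m na unfolding mcs_def by blast+
    then obtain L1 L2 where L: "set L1 \<subseteq> M" "GLP_prv (imps L1 (Neg (Neg a)))" "set L2 \<subseteq> M" "GLP_prv (imps L2 (Neg a))"
      using incons_insert by meson
    have "GLP_prv (imps (L1 @ L2) Bot)"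
    proof (rule prv_sem[of "[imps L1 (Neg (Neg a)), imps L2 (Neg a)]"])
      show "\<forall>x\<in>set [imps L1 (Neg (Neg a)), imps L2 (Neg a)]. GLP_prv x" using L by simp
    next
      fix v assume "\<forall>x\<in>set [imps L1 (Neg (Neg a)), imps L2 (Neg a)]. beval v x"
      then show "beval v (imps (L1 @ L2) Bot)" by auto
    qed
    moreover have "set (L1 @ L2) \<subseteq> M" using L by simp
    ultimately have "incons M" unfolding incons_def by blast
    then show False using m unfolding mcs_def by blast
  qed
qed

lemma mcs_imp: "mcs M \<Longrightarrow> (Imp a b \<in> M) = (a \<in> M \<longrightarrow> b \<in> M)"
proof
  assume "mcs M" "Imp a b \<in> M" then show "a \<in> M \<longrightarrow> b \<in> M" using mcs_mp by blast
next
  assume m: "mcs M" and h: "a \<in> M \<longrightarrow> b \<in> M"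
  show "Imp a b \<in> M"
  proof (cases "a \<in> M")
    case True then show ?thesis using h m by (intro mcs_sem[of M "[b]" "[]"]) auto
  next
    case False then have "Neg a \<in> M" using m mcs_neg by blast
    then show ?thesis using m by (intro mcs_sem[of M "[Neg a]" "[]"]) auto
  qed
qed

definition R0 :: "fm set \<Rightarrow> fm set \<Rightarrow> bool" where
  "R0 M N \<longleftrightarrow> (\<forall>t. Box 0 t \<in> M \<longrightarrow> t \<in> N)"

lemma R0_trans: "mcs M \<Longrightarrow> R0 M N \<Longrightarrow> R0 N K \<Longrightarrow> R0 M K"
  unfolding R0_def using mcs_mp mcs_prv prv_trans4 by blast

lemma existence:
  assumes m: "mcs M" and nb: "Box 0 t \<notin> M"
  shows "\<exists>N. mcs N \<and> R0 M N \<and> t \<notin> N"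
proof -
  let ?S = "insert (Neg t) {r. Box 0 r \<in> M}"
  have "\<not> incons ?S"
  proof
    assume "incons ?S"
    then obtain L where L: "set L \<subseteq> {r. Box 0 r \<in> M}" "GLP_prv (imps L (Neg (Neg t)))"
      using incons_insert by blast
    have "GLP_prv (imps L t)" by (rule prv_sem[of "[imps L (Neg (Neg t))]"]) (use L in auto)
    then have "GLP_prv (imps (map (Box 0) L) (Box 0 t))"
      using GLP_prv.MP[OF prv_box_imps GLP_prv.Nec] by blast
    moreover have "set (map (Box 0) L) \<subseteq> M" using L by auto
    ultimately have "Box 0 t \<in> M" using m by (intro mcs_sem[of M "map (Box 0) L" "[imps (map (Box 0) L) (Box 0 t)]"]) auto
    then show False using nb by simp
  qed
  then obtain N where "mcs N" "?S \<subseteq> N" using lindenbaum by blast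
  then show ?thesis unfolding R0_def using mcs_neg by auto
qed


fun Nf :: "fm \<Rightarrow> nat \<Rightarrow> fm \<Rightarrow> fm" where
  "Nf f 0 x = x"
| "Nf f (Suc k) x = Or f (Box 0 (Nf f k x))"

lemma Nf_Q: "Nf f k f = Q (Suc k) f"
  by (induction k) auto

lemma Nf_comp: "Nf f k (Nf f j x) = Nf f (k + j) x"
  by (induction k) auto

lemma Nf_mono2: "GLP_prv (Imp a (Imp b c)) \<Longrightarrow> GLP_prv (Imp (Nf f k a) (Imp (Nf f k b) (Nf f k c)))"
proof (induction k)
  case 0 then show ?case by simp
next
  case (Suc k)
  have 1: "GLP_prv (Imp (Box 0 (Nf f k a)) (Imp (Box 0 (Nf f k b)) (Box 0 (Nf f k c))))"
    using prv_mono2 Suc by blast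
  show ?case
    by (simp, rule prv_sem[of "[Imp (Box 0 (Nf f k a)) (Imp (Box 0 (Nf f k b)) (Box 0 (Nf f k c)))]"]) (use 1 in auto)
qed

lemma Nf_mono: assumes "GLP_prv (Imp a b)" shows "GLP_prv (Imp (Nf f k a) (Nf f k b))"
proof -
  have "GLP_prv (Imp a (Imp a b))" by (rule prv_sem[of "[Imp a b]"]) (use assms in auto)
  then have "GLP_prv (Imp (Nf f k a) (Imp (Nf f k a) (Nf f k b)))" by (rule Nf_mono2)
  then show ?thesis by (intro prv_sem[of "[Imp (Nf f k a) (Imp (Nf f k a) (Nf f k b))]"]) auto
qed

lemma Nf_up: "GLP_prv (Imp (Nf f (Suc k) a) (Nf f (Suc (Suc k)) a))"
proof (induction k)
  case 0
  have 1: "GLP_prv (Imp (Box 0 a) (Box 0 (Box 0 a)))" by (rule prv_trans4)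
  have 2: "GLP_prv (Imp (Box 0 (Box 0 a)) (Box 0 (Or f (Box 0 a))))"
    by (rule prv_mono, rule prv_sem[of "[]"]) auto
  show ?case
    by (simp, rule prv_sem[of "[Imp (Box 0 a) (Box 0 (Box 0 a)), Imp (Box 0 (Box 0 a)) (Box 0 (Or f (Box 0 a)))]"]) (use 1 2 in auto)
next
  case (Suc k)
  have 1: "GLP_prv (Imp (Box 0 (Nf f (Suc k) a)) (Box 0 (Nf f (Suc (Suc k)) a)))"
    using prv_mono Suc by blast
  show ?case
    by (subst (1 2) Nf.simps(2), rule prv_sem[of "[Imp (Box 0 (Nf f (Suc k) a)) (Box 0 (Nf f (Suc (Suc k)) a))]"]) (use 1 in auto)
qed

lemma Nf_lift: "GLP_prv (Nf f (Suc k) a) \<Longrightarrow> k \<le> m \<Longrightarrow> GLP_prv (Nf f (Suc m) a)"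
proof (induction m)
  case 0 then show ?case by simp
next
  case (Suc m)
  show ?case
  proof (cases "k = Suc m")
    case True then show ?thesis using Suc by simp
  next
    case False
    then have "GLP_prv (Nf f (Suc m) a)" using Suc by simp
    then show ?thesis using GLP_prv.MP[OF Nf_up] by blast
  qed
qed

definition Bs :: "fm \<Rightarrow> fm set" where
  "Bs f = {x. \<exists>k. GLP_prv (Nf f (Suc k) x)}"

lemma Bs_imp: "a \<in> Bs f \<Longrightarrow> GLP_prv (Imp a b) \<Longrightarrow> b \<in> Bs f"
  unfolding Bs_def using Nf_mono GLP_prv.MP by blast

lemma Bs_and: assumes "a \<in> Bs f" "b \<in> Bs f" shows "And a b \<in> Bs f"
proof -
  obtain k1 k2 where k: "GLP_prv (Nf f (Suc k1) a)" "GLP_prv (Nf f (Suc k2) b)" using assms by (auto simp: Bs_def)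
  let ?m = "max k1 k2"
  have 1: "GLP_prv (Nf f (Suc ?m) a)" "GLP_prv (Nf f (Suc ?m) b)" using Nf_lift k by auto
  have "GLP_prv (Imp a (Imp b (And a b)))" by (rule prv_sem[of "[]"]) auto
  then have "GLP_prv (Imp (Nf f (Suc ?m) a) (Imp (Nf f (Suc ?m) b) (Nf f (Suc ?m) (And a b))))" by (rule Nf_mono2)
  then have "GLP_prv (Nf f (Suc ?m) (And a b))" using 1 GLP_prv.MP by blast
  then show ?thesis by (auto simp: Bs_def)
qed

lemma Bs_top: "Imp Bot Bot \<in> Bs f"
proof -
  have "GLP_prv (Box 0 (Imp Bot Bot))" by (rule GLP_prv.Nec, rule prv_sem[of "[]"]) auto
  then have "GLP_prv (Nf f (Suc 0) (Imp Bot Bot))" by (simp, intro prv_sem[of "[Box 0 (Imp Bot Bot)]"]) auto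
  then show ?thesis unfolding Bs_def by blast
qed

lemma Bs_cj: "set L \<subseteq> Bs f \<Longrightarrow> cj L \<in> Bs f"
  by (induction L) (auto intro: Bs_and Bs_top)

lemma Bs_N1: "Or f (Box 0 x) \<in> Bs f \<Longrightarrow> x \<in> Bs f"
proof -
  assume "Or f (Box 0 x) \<in> Bs f"
  then obtain k where "GLP_prv (Nf f (Suc k) (Nf f 1 x))" by (auto simp: Bs_def)
  then have "GLP_prv (Nf f (Suc (Suc k)) x)" by (simp only: Nf_comp) simp
  then show ?thesis unfolding Bs_def by blast
qed

definition StepS :: "fm \<Rightarrow> fm set \<Rightarrow> fm set" where
  "StepS f M = insert (Neg f) (Bs f \<union> (\<lambda>t. Neg (Box 0 t)) ` (- M))"

lemma step_cons:
  assumes m: "mcs M" and bm: "Bs f \<subseteq> M"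
  shows "\<not> incons (StepS f M)"
proof
  assume "incons (StepS f M)"
  then obtain L where L: "set L \<subseteq> StepS f M" "GLP_prv (imps L Bot)" by (auto simp: incons_def)
  let ?X = "set L \<inter> (\<lambda>t. Neg (Box 0 t)) ` (- M)"
  obtain C where C: "C \<subseteq> - M" "finite C" "?X = (\<lambda>t. Neg (Box 0 t)) ` C"
    using finite_subset_image[of ?X "\<lambda>t. Neg (Box 0 t)" "- M"] by auto
  obtain Lt where Lt: "set Lt = C" using finite_list C(2) by blast
  let ?L1 = "filter (\<lambda>a. a \<in> Bs f) L"
  let ?P = "imps L Bot # map (\<lambda>t. Imp (Box 0 t) (Box 0 (dj Lt))) Lt"
  have "GLP_prv (Imp (cj ?L1) (Or f (Box 0 (dj Lt))))"
  proof (rule prv_sem[of ?P])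
    show "\<forall>a\<in>set ?P. GLP_prv a"
    proof
      fix a assume "a \<in> set ?P"
      then have "a = imps L Bot \<or> a \<in> set (map (\<lambda>t. Imp (Box 0 t) (Box 0 (dj Lt))) Lt)" by simp
      then show "GLP_prv a"
      proof
        assume "a = imps L Bot" then show ?thesis using L by simp
      next
        assume "a \<in> set (map (\<lambda>t. Imp (Box 0 t) (Box 0 (dj Lt))) Lt)"
        then obtain t where t: "t \<in> set Lt" "a = Imp (Box 0 t) (Box 0 (dj Lt))" by auto
        have "GLP_prv (Imp t (dj Lt))" by (rule prv_sem[of "[]"]) (use t in auto)
        then show ?thesis using t prv_mono by blast
      qed
    qed
  next
    fix v assume h: "\<forall>a\<in>set ?P. beval v a"
    show "beval v (Imp (cj ?L1) (Or f (Box 0 (dj Lt))))"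
    proof (rule ccontr)
      assume "\<not> beval v (Imp (cj ?L1) (Or f (Box 0 (dj Lt))))"
      then have c1: "\<forall>a\<in>set ?L1. beval v a" and nf: "\<not> beval v f" and nb: "\<not> v (Box 0 (dj Lt))" by auto
      have "\<forall>a\<in>set L. beval v a"
      proof
        fix a assume aL: "a \<in> set L"
        show "beval v a"
        proof (cases "a \<in> Bs f")
          case True then show ?thesis using c1 aL by auto
        next
          case False
          then have "a = Neg f \<or> a \<in> (\<lambda>t. Neg (Box 0 t)) ` (- M)" using L(1) aL by (auto simp: StepS_def)
          then show ?thesis
          proof
            assume "a = Neg f" then show ?thesis using nf by simp
          next
            assume "a \<in> (\<lambda>t. Neg (Box 0 t)) ` (- M)"
            then have "a \<in> ?X" using aL by blast
            then obtain t where t: "t \<in> set Lt" "a = Neg (Box 0 t)" using C(3) Lt by auto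
            have "beval v (Imp (Box 0 t) (Box 0 (dj Lt)))" using h t(1) by auto
            then show ?thesis using t nb by simp
          qed
        qed
      qed
      then show False using h by auto
    qed
  qed
  moreover have "cj ?L1 \<in> Bs f" by (rule Bs_cj) auto
  ultimately have "Or f (Box 0 (dj Lt)) \<in> Bs f" using Bs_imp by blast
  then have "dj Lt \<in> M" using Bs_N1 bm by blast
  moreover have "set (map Neg Lt) \<subseteq> M" using Lt C(1) m mcs_neg by auto
  ultimately have "Bot \<in> M" using m by (intro mcs_sem[of M "dj Lt # map Neg Lt" "[]"]) auto
  then show False using m mcs_bot by blast
qed

lemma base_cons:
  assumes hyp: "\<forall>k\<ge>1. \<not> GLP_prv (Q k f)"
  shows "\<not> incons (insert (Neg f) (Bs f))"
proof
  assume "incons (insert (Neg f) (Bs f))"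
  then obtain L where L: "set L \<subseteq> Bs f" "GLP_prv (imps L (Neg (Neg f)))" using incons_insert by blast
  have "GLP_prv (Imp (cj L) f)" by (rule prv_sem[of "[imps L (Neg (Neg f))]"]) (use L in auto)
  then have "f \<in> Bs f" using Bs_cj[OF L(1)] Bs_imp by blast
  then obtain k where "GLP_prv (Nf f (Suc k) f)" by (auto simp: Bs_def)
  then have "GLP_prv (Q (Suc (Suc k)) f)" by (simp only: Nf_Q)
  moreover have "\<not> GLP_prv (Q (Suc (Suc k)) f)" using hyp by (metis le_add1 plus_1_eq_Suc)
  ultimately show False by blast
qed

fun chain :: "fm \<Rightarrow> nat \<Rightarrow> fm set" where
  "chain f 0 = (SOME N. mcs N \<and> insert (Neg f) (Bs f) \<subseteq> N)"
| "chain f (Suc n) = (SOME N. mcs N \<and> StepS f (chain f n) \<subseteq> N)"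

lemma chain_props:
  assumes hyp: "\<forall>k\<ge>1. \<not> GLP_prv (Q k f)"
  shows "mcs (chain f n) \<and> Bs f \<subseteq> chain f n \<and> Neg f \<in> chain f n"
proof (induction n)
  case 0
  have "\<exists>N. mcs N \<and> insert (Neg f) (Bs f) \<subseteq> N" using lindenbaum base_cons[OF hyp] by blast
  then have "mcs (chain f 0) \<and> insert (Neg f) (Bs f) \<subseteq> chain f 0" unfolding chain.simps by (rule someI_ex)
  then show ?case by auto
next
  case (Suc n)
  have "\<exists>N. mcs N \<and> StepS f (chain f n) \<subseteq> N" using lindenbaum step_cons Suc by blast
  then have "mcs (chain f (Suc n)) \<and> StepS f (chain f n) \<subseteq> chain f (Suc n)" unfolding chain.simps by (rule someI_ex)
  then show ?case by (auto simp: StepS_def)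
qed

lemma chain_R:
  assumes hyp: "\<forall>k\<ge>1. \<not> GLP_prv (Q k f)"
  shows "R0 (chain f (Suc n)) (chain f n)"
proof -
  have "\<exists>N. mcs N \<and> StepS f (chain f n) \<subseteq> N" using lindenbaum step_cons chain_props[OF hyp] by blast
  then have s: "mcs (chain f (Suc n)) \<and> StepS f (chain f n) \<subseteq> chain f (Suc n)" unfolding chain.simps by (rule someI_ex)
  show ?thesis unfolding R0_def
  proof (intro allI impI)
    fix t assume b: "Box 0 t \<in> chain f (Suc n)"
    show "t \<in> chain f n"
    proof (rule ccontr)
      assume "t \<notin> chain f n"
      then have "Neg (Box 0 t) \<in> chain f (Suc n)" using s by (auto simp: StepS_def)
      then show False using b s mcs_neg by blast
    qed
  qed
qed

lemma chain_R_lt: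
  assumes hyp: "\<forall>k\<ge>1. \<not> GLP_prv (Q k f)"
  shows "m < n \<Longrightarrow> R0 (chain f n) (chain f m)"
proof (induction n)
  case 0 then show ?case by simp
next
  case (Suc n)
  show ?case
  proof (cases "m = n")
    case True then show ?thesis using chain_R[OF hyp] by simp
  next
    case False
    then have "R0 (chain f n) (chain f m)" using Suc by simp
    then show ?thesis using R0_trans chain_R[OF hyp] chain_props[OF hyp] by blast
  qed
qed


definition Iw :: "fm \<Rightarrow> fm set set" where
  "Iw f = {T. mcs T \<and> (\<exists>n. T = chain f n \<or> R0 (chain f n) T)}"

definition Vf :: "fm \<Rightarrow> fm \<Rightarrow> bool" where
  "Vf f x = (case x of Box k p \<Rightarrow>
      (if k = 0 then (\<forall>T\<in>Iw f. p \<in> T)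
       else if k = 1 then (\<exists>N. \<forall>n\<ge>N. p \<in> chain f n \<and> Box 1 p \<in> chain f n)
       else True)
    | _ \<Rightarrow> False)"

lemma Vf_0[simp]: "Vf f (Box 0 p) = (\<forall>T\<in>Iw f. p \<in> T)" by (simp add: Vf_def)
lemma Vf_1[simp]: "Vf f (Box 1 p) = (\<exists>N. \<forall>n\<ge>N. p \<in> chain f n \<and> Box 1 p \<in> chain f n)" by (simp add: Vf_def)
lemma Vf_1'[simp]: "Vf f (Box (Suc 0) p) = (\<exists>N. \<forall>n\<ge>N. p \<in> chain f n \<and> Box 1 p \<in> chain f n)" by (simp add: Vf_def)
lemma Vf_2: "k \<ge> 2 \<Longrightarrow> Vf f (Box k p) = True" by (simp add: Vf_def)

lemma k_cases: obtains "k = 0" | "k = 1" | "k \<ge> (2::nat)" by linarith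

context
  fixes f :: fm
  assumes hyp: "\<forall>k\<ge>1. \<not> GLP_prv (Q k f)"
begin

lemma chain_mcs: "mcs (chain f n)" using chain_props[OF hyp] by blast

lemma chain_I: "chain f n \<in> Iw f" using chain_mcs by (auto simp: Iw_def)

lemma I_mcs: "T \<in> Iw f \<Longrightarrow> mcs T" by (auto simp: Iw_def)

lemma I_closed: "T \<in> Iw f \<Longrightarrow> mcs T' \<Longrightarrow> R0 T T' \<Longrightarrow> T' \<in> Iw f"
  unfolding Iw_def using R0_trans chain_mcs by blast

lemma box0_I: assumes "T \<in> Iw f" "\<forall>T'\<in>Iw f. p \<in> T'" shows "Box 0 p \<in> T"
proof (rule ccontr)
  assume "Box 0 p \<notin> T"
  then obtain N where "mcs N" "R0 T N" "p \<notin> N" using existence I_mcs assms(1) by blast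
  then show False using I_closed assms by blast
qed

lemma sees_eventually: assumes "T \<in> Iw f" shows "\<exists>N. \<forall>n\<ge>N. R0 (chain f n) T"
proof -
  obtain m where m: "T = chain f m \<or> R0 (chain f m) T" using assms by (auto simp: Iw_def)
  have "\<forall>n\<ge>Suc m. R0 (chain f n) T"
  proof (intro allI impI)
    fix n assume "n \<ge> Suc m"
    then have r: "R0 (chain f n) (chain f m)" using chain_R_lt[OF hyp] by simp
    show "R0 (chain f n) T" using m
    proof
      assume "T = chain f m" then show ?thesis using r by simp
    next
      assume "R0 (chain f m) T" then show ?thesis using r R0_trans chain_mcs by blast
    qed
  qed
  then show ?thesis by blast
qed

lemma soundness: "GLP_prv x \<Longrightarrow> beval (Vf f) x"
proof (induction rule: GLP_prv.induct)
  case (taut p) then show ?case by (simp add: tautology_def)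
next
  case (K k p q)
  show ?case
  proof (cases k rule: k_cases)
    case 1
    then show ?thesis using I_mcs mcs_mp by auto
  next
    case 2
    show ?thesis
    proof (simp only: 2 beval.simps Vf_1, intro impI)
      assume "\<exists>N. \<forall>n\<ge>N. Imp p q \<in> chain f n \<and> Box 1 (Imp p q) \<in> chain f n"
        "\<exists>N. \<forall>n\<ge>N. p \<in> chain f n \<and> Box 1 p \<in> chain f n"
      then obtain N1 N2 where a: "\<forall>n\<ge>N1. Imp p q \<in> chain f n \<and> Box 1 (Imp p q) \<in> chain f n"
        "\<forall>n\<ge>N2. p \<in> chain f n \<and> Box 1 p \<in> chain f n" by blast
      have "\<forall>n\<ge>max N1 N2. q \<in> chain f n \<and> Box 1 q \<in> chain f n"
      proof (intro allI impI)
        fix n assume "n \<ge> max N1 N2"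
        then have "Imp p q \<in> chain f n" "Box 1 (Imp p q) \<in> chain f n" "p \<in> chain f n" "Box 1 p \<in> chain f n"
          using a by auto
        moreover have "Imp (Box 1 (Imp p q)) (Imp (Box 1 p) (Box 1 q)) \<in> chain f n"
          using mcs_prv chain_mcs GLP_prv.K by blast
        ultimately show "q \<in> chain f n \<and> Box 1 q \<in> chain f n" using mcs_mp chain_mcs by blast
      qed
      then show "\<exists>N. \<forall>n\<ge>N. q \<in> chain f n \<and> Box 1 q \<in> chain f n" by blast
    qed
  next
    case 3 then show ?thesis by (simp add: Vf_2)
  qed
next
  case (Loeb k p)
  show ?case
  proof (cases k rule: k_cases)
    case 1
    show ?thesis
    proof (simp add: 1, intro impI ballI)
      fix T assume all: "\<forall>T\<in>Iw f. Imp (Box 0 p) p \<in> T" and T: "T \<in> Iw f"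
      show "p \<in> T"
      proof (rule ccontr)
        assume np: "p \<notin> T"
        have mT: "mcs T" using T I_mcs by blast
        have "Box 0 p \<notin> T" using np all T mT mcs_mp by blast
        moreover have "Imp (Box 0 (Imp (Box 0 p) p)) (Box 0 p) \<in> T" using mT mcs_prv GLP_prv.Loeb by blast
        ultimately have "Box 0 (Imp (Box 0 p) p) \<notin> T" using mT mcs_mp by blast
        then obtain N where N: "mcs N" "R0 T N" "Imp (Box 0 p) p \<notin> N" using existence mT by blast
        then show False using I_closed T all by blast
      qed
    qed
  next
    case 2
    show ?thesis
    proof (simp only: 2 beval.simps Vf_1, intro impI)
      assume "\<exists>N. \<forall>n\<ge>N. Imp (Box 1 p) p \<in> chain f n \<and> Box 1 (Imp (Box 1 p) p) \<in> chain f n"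
      then obtain N where a: "\<forall>n\<ge>N. Imp (Box 1 p) p \<in> chain f n \<and> Box 1 (Imp (Box 1 p) p) \<in> chain f n" by blast
      have "\<forall>n\<ge>N. p \<in> chain f n \<and> Box 1 p \<in> chain f n"
      proof (intro allI impI)
        fix n assume "n \<ge> N"
        then have "Imp (Box 1 p) p \<in> chain f n" "Box 1 (Imp (Box 1 p) p) \<in> chain f n" using a by auto
        moreover have "Imp (Box 1 (Imp (Box 1 p) p)) (Box 1 p) \<in> chain f n"
          using mcs_prv chain_mcs GLP_prv.Loeb by blast
        ultimately show "p \<in> chain f n \<and> Box 1 p \<in> chain f n" using mcs_mp chain_mcs by blast
      qed
      then show "\<exists>N. \<forall>n\<ge>N. p \<in> chain f n \<and> Box 1 p \<in> chain f n" by blast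
    qed
  next
    case 3 then show ?thesis by (simp add: Vf_2)
  qed
next
  case (Ax3 j k p)
  show ?case
  proof (cases k rule: k_cases)
    case 1 then show ?thesis using Ax3 by simp
  next
    case 2
    then have j: "j = 0" using Ax3 by simp
    have "\<not> (\<forall>T\<in>Iw f. Neg p \<in> T) \<longrightarrow> (\<exists>N. \<forall>n\<ge>N. Dia 0 p \<in> chain f n \<and> Box 1 (Dia 0 p) \<in> chain f n)"
    proof (intro impI)
      assume "\<not> (\<forall>T\<in>Iw f. Neg p \<in> T)"
      then obtain T where T: "T \<in> Iw f" "Neg p \<notin> T" by blast
      obtain N where N: "\<forall>n\<ge>N. R0 (chain f n) T" using sees_eventually T(1) by blast
      have "\<forall>n\<ge>N. Dia 0 p \<in> chain f n \<and> Box 1 (Dia 0 p) \<in> chain f n"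
      proof (intro allI impI)
        fix n assume "n \<ge> N"
        then have r: "R0 (chain f n) T" using N by blast
        have "Box 0 (Neg p) \<notin> chain f n" using r T(2) unfolding R0_def by blast
        then have d: "Dia 0 p \<in> chain f n" using chain_mcs mcs_neg unfolding Dia_def by blast
        moreover have "Imp (Dia 0 p) (Box 1 (Dia 0 p)) \<in> chain f n"
          using mcs_prv chain_mcs GLP_prv.Ax3[of 0 1 p] by simp
        ultimately show "Dia 0 p \<in> chain f n \<and> Box 1 (Dia 0 p) \<in> chain f n" using mcs_mp chain_mcs by blast
      qed
      then show "\<exists>N. \<forall>n\<ge>N. Dia 0 p \<in> chain f n \<and> Box 1 (Dia 0 p) \<in> chain f n" by blast
    qed
    then show ?thesis by (simp add: 2 j)
  next
    case 3 then show ?thesis by (simp add: Vf_2)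
  qed
next
  case (Ax4 j k p)
  show ?case
  proof (cases "j = k")
    case True then show ?thesis by simp
  next
    case False
    show ?thesis
    proof (cases k rule: k_cases)
      case 1 then show ?thesis using Ax4 False by simp
    next
      case 2
      then have j: "j = 0" using Ax4 False by simp
      show ?thesis
      proof (simp only: 2 j beval.simps Vf_1 Vf_0 Dia_def Neg_def, intro impI)
        assume all: "\<forall>T\<in>Iw f. p \<in> T"
        have "\<forall>n\<ge>0. p \<in> chain f n \<and> Box 1 p \<in> chain f n"
        proof (intro allI impI)
          fix n
          have "Box 0 p \<in> chain f n" using box0_I chain_I all by blast
          moreover have "Imp (Box 0 p) (Box 1 p) \<in> chain f n"
            using mcs_prv chain_mcs GLP_prv.Ax4[of 0 1 p] by simp
          ultimately show "p \<in> chain f n \<and> Box 1 p \<in> chain f n" using all chain_I mcs_mp chain_mcs by blast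
        qed
        then show "\<exists>N. \<forall>n\<ge>N. p \<in> chain f n \<and> Box 1 p \<in> chain f n" by blast
      qed
    next
      case 3 then show ?thesis by (simp add: Vf_2)
    qed
  qed
next
  case (MP p q) then show ?case by simp
next
  case (Nec p k)
  show ?case
  proof (cases k rule: k_cases)
    case 1 then show ?thesis using Nec I_mcs mcs_prv by auto
  next
    case 2 then show ?thesis using Nec chain_mcs mcs_prv GLP_prv.Nec by auto
  next
    case 3 then show ?thesis by (simp add: Vf_2)
  qed
qed

lemma hard_dir: "\<not> GLP_prv (Box 1 f)"
proof
  assume "GLP_prv (Box 1 f)"
  then have "beval (Vf f) (Box 1 f)" by (rule soundness)
  then obtain N where "f \<in> chain f N" by auto
  moreover have "Neg f \<in> chain f N" using chain_props[OF hyp] by blast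
  ultimately show False using mcs_neg chain_mcs by blast
qed

end

lemma easy_step: "GLP_prv (Imp (Box 1 (Q (Suc k) f)) (Box 1 f))"
proof (induction k)
  case 0 then show ?case by (simp, intro prv_sem[of "[]"]) auto
next
  case (Suc k)
  define X where "X = Q (Suc k) f"
  have eq: "Q (Suc (Suc k)) f = Or f (Box 0 X)" by (simp add: X_def)
  have IH: "GLP_prv (Imp (Box 1 X) (Box 1 f))" using Suc X_def by simp
  have P1: "GLP_prv (Imp (Box 0 X) (Box 1 X))" using GLP_prv.Ax4[of 0 1 X] by simp
  have P2: "GLP_prv (Imp (Dia 0 (Neg X)) (Box 1 (Dia 0 (Neg X))))" using GLP_prv.Ax3[of 0 1 "Neg X"] by simp
  have P4: "GLP_prv (Imp (Box 0 (Neg (Neg X))) (Box 0 X))" by (rule prv_mono, rule prv_sem[of "[]"]) auto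
  have P5: "GLP_prv (Imp (Box 0 X) (Box 0 (Neg (Neg X))))" by (rule prv_mono, rule prv_sem[of "[]"]) auto
  have "GLP_prv (Imp (Or f (Box 0 X)) (Imp (Dia 0 (Neg X)) f))"
    by (rule prv_sem[of "[Imp (Box 0 X) (Box 0 (Neg (Neg X)))]"]) (use P5 in auto)
  then have P3: "GLP_prv (Imp (Box 1 (Or f (Box 0 X))) (Imp (Box 1 (Dia 0 (Neg X))) (Box 1 f)))"
    by (rule prv_mono2)
  show ?case unfolding eq
    by (rule prv_sem[of "[Imp (Box 1 X) (Box 1 f), Imp (Box 0 X) (Box 1 X), Imp (Dia 0 (Neg X)) (Box 1 (Dia 0 (Neg X))),
        Imp (Box 1 (Or f (Box 0 X))) (Imp (Box 1 (Dia 0 (Neg X))) (Box 1 f)), Imp (Box 0 (Neg (Neg X))) (Box 0 X)]"])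
       (use IH P1 P2 P3 P4 in auto)
qed

theorem mainTheorem15:
  fixes \<phi> :: fm
  shows "GLP_prv (Box 1 \<phi>) \<longleftrightarrow> (\<exists>k\<ge>1. GLP_prv (Q k \<phi>))"
proof
  assume "GLP_prv (Box 1 \<phi>)"
  then show "\<exists>k\<ge>1. GLP_prv (Q k \<phi>)" using hard_dir by blast
next
  assume "\<exists>k\<ge>1. GLP_prv (Q k \<phi>)"
  then obtain k where k: "k \<ge> 1" "GLP_prv (Q k \<phi>)" by blast
  then obtain j where j: "k = Suc j" using not0_implies_Suc by fastforce
  have "GLP_prv (Box 1 (Q (Suc j) \<phi>))" using k j GLP_prv.Nec by simp
  then show "GLP_prv (Box 1 \<phi>)" using easy_step GLP_prv.MP by blast
qed

end
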